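(* Let $(M,d)$ be a bounded hyperconvex metric space and let $T: M\to M$ be an orbitally wrt nonexpansive mapping. Then $F(T)=\{x\in M: Tx=x\}\neq\emptyset$ and $F(T)$ (with the induced metric) is hyperconvex.
   Context: A metric space $(M,d)$ is hyperconvex if for every family of closed balls $\{B(x_i,r_i)\}_{i\in I}$ in $M$ with $d(x_i,x_j)\le r_i+r_j$ for all $i,j$, one has $\bigcap_{i}B(x_i,r_i)\neq\emptyset$. For $x\in M$, $K\subseteq M$, $r_x(K)=\sup\{d(x,y):y\in K\}$; $O_T(y)=\{y,Ty,T^2y,\dots\}$. $T$ is orbitally wrt nonexpansive if $d(Tx,Ty)\le r_x(O_T(y))$ for all $x,y\in M$. *)

theory Defs
  imports "HOL-Analysis.Analysis"
begin

definition hyperconvex :: "'a::metric_space set \<Rightarrow> bool" where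
  "hyperconvex S \<longleftrightarrow>
     (\<forall>F \<subseteq> S \<times> (UNIV :: real set).
        (\<forall>(x, r) \<in> F. \<forall>(y, s) \<in> F. dist x y \<le> r + s) \<longrightarrow>
        (\<exists>z \<in> S. \<forall>(x, r) \<in> F. dist x z \<le> r))"

definition orbit :: "('a \<Rightarrow> 'a) \<Rightarrow> 'a \<Rightarrow> 'a set" where
  "orbit T y = range (\<lambda>n. (T ^^ n) y)"

definition rad :: "'a::metric_space \<Rightarrow> 'a set \<Rightarrow> real" where
  "rad x K = (SUP y\<in>K. dist x y)"

definition orbitally_wrt_nonexpansive :: "'a::metric_space set \<Rightarrow> ('a \<Rightarrow> 'a) \<Rightarrow> bool" where
  "orbitally_wrt_nonexpansive M T \<longleftrightarrow>
     (\<forall>x\<in>M. \<forall>y\<in>M. dist (T x) (T y) \<le> rad x (orbit T y))"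

end

theory Submission
  imports Defs
begin

definition adm :: "'a::metric_space set \<Rightarrow> ('a \<times> real) set \<Rightarrow> 'a set" where
  "adm M F = {z\<in>M. \<forall>(x,r)\<in>F. dist x z \<le> r}"

lemma adm_memD:
  assumes "z \<in> adm M F" "(a,b) \<in> F"
  shows "dist a z \<le> b"
  using assms unfolding adm_def by auto

lemma hyperconvexD:
  assumes "hyperconvex M" "F \<subseteq> M \<times> UNIV"
    "\<And>x r y s. (x,r)\<in>F \<Longrightarrow> (y,s)\<in>F \<Longrightarrow> dist x y \<le> r + s"
  shows "adm M F \<noteq> {}"
proof -
  have pw: "\<forall>(x, r)\<in>F. \<forall>(y, s)\<in>F. dist x y \<le> r + s"
    using assms(3) by blast
  have H: "\<forall>F\<subseteq>M \<times> (UNIV :: real set).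
        (\<forall>(x, r) \<in> F. \<forall>(y, s) \<in> F. dist x y \<le> r + s) \<longrightarrow>
        (\<exists>z \<in> M. \<forall>(x, r) \<in> F. dist x z \<le> r)"
    using assms(1) unfolding hyperconvex_def .
  have "\<exists>z \<in> M. \<forall>(x, r) \<in> F. dist x z \<le> r"
    using mp[OF mp[OF spec[OF H, of F] assms(2)] pw] .
  then obtain z where "z \<in> M" "\<forall>(x, r)\<in>F. dist x z \<le> r" ..
  then have "z \<in> adm M F" unfolding adm_def by simp
  then show ?thesis by blast
qed

lemma fixed_point_exists:
  fixes M :: "'a::metric_space set" and T :: "'a \<Rightarrow> 'a"
  assumes bM: "bounded M" and hM: "hyperconvex M" and TM: "T ` M \<subseteq> M"
    and orb: "\<And>x y. x \<in> M \<Longrightarrow> y \<in> M \<Longrightarrow> dist (T x) (T y) \<le> rad x (orbit T y)"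
  shows "\<exists>x\<in>M. T x = x"
proof -
  define \<A> where "\<A> = {K. K \<noteq> {} \<and> T ` K \<subseteq> K \<and> (\<exists>F\<subseteq>M\<times>UNIV. K = adm M F)}"
  have "\<exists>U\<in>uminus`\<A>. \<forall>X\<in>C. X \<subseteq> U" if ch: "subset.chain (uminus`\<A>) C" for C
  proof -
    define \<K> where "\<K> = uminus ` C"
    have KA: "\<K> \<subseteq> \<A>" using ch unfolding \<K>_def subset_chain_def by auto
    have Kch: "K1 \<subseteq> K2 \<or> K2 \<subseteq> K1" if K1K2: "K1 \<in> \<K>" "K2 \<in> \<K>" for K1 K2
    proof -
      obtain X where X: "K1 = - X" "X \<in> C"
        using K1K2(1) unfolding \<K>_def by (rule imageE)
      obtain Y where Y: "K2 = - Y" "Y \<in> C"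
        using K1K2(2) unfolding \<K>_def by (rule imageE)
      have XY: "X \<in> C" "Y \<in> C" "K1 = - X" "K2 = - Y" using X Y by auto
      have "X \<subseteq> Y \<or> Y \<subseteq> X" using ch XY(1,2) unfolding subset_chain_def by blast
      then show ?thesis using XY(3,4) by auto
    qed
    have "\<forall>K\<in>\<K>. \<exists>F. F \<subseteq> M\<times>UNIV \<and> K = adm M F" using KA unfolding \<A>_def by auto
    then obtain FF where FF: "\<And>K. K\<in>\<K> \<Longrightarrow> FF K \<subseteq> M\<times>UNIV \<and> K = adm M (FF K)" by metis
    define G where "G = \<Union>(FF`\<K>)"
    have GM: "G \<subseteq> M \<times> UNIV" using FF unfolding G_def by auto
    have IK: "adm M G = M \<inter> \<Inter>\<K>"
    proof
      show "adm M G \<subseteq> M \<inter> \<Inter>\<K>"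
      proof
        fix z assume z: "z \<in> adm M G"
        have "z \<in> K" if "K \<in> \<K>" for K
        proof -
          have "z \<in> adm M (FF K)" using z that unfolding adm_def G_def by auto
          then show ?thesis using FF[OF that] by simp
        qed
        then show "z \<in> M \<inter> \<Inter>\<K>" using z unfolding adm_def by auto
      qed
    next
      show "M \<inter> \<Inter>\<K> \<subseteq> adm M G"
      proof
        fix z assume z: "z \<in> M \<inter> \<Inter>\<K>"
        have "\<forall>(x,r)\<in>G. dist x z \<le> r"
        proof (clarify)
          fix x r assume "(x,r) \<in> G"
          then obtain K where K: "K \<in> \<K>" "(x,r) \<in> FF K" unfolding G_def by auto
          then have "z \<in> adm M (FF K)" using FF[OF K(1)] z by auto
          then show "dist x z \<le> r" using K unfolding adm_def by auto
        qed
        then show "z \<in> adm M G" using z unfolding adm_def by auto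
      qed
    qed
    have "adm M G \<noteq> {}"
    proof (rule hyperconvexD[OF hM GM])
      fix x r y s assume xr: "(x,r) \<in> G" and ys: "(y,s) \<in> G"
      then obtain K1 K2 where K: "K1 \<in> \<K>" "(x,r) \<in> FF K1" "K2 \<in> \<K>" "(y,s) \<in> FF K2"
        unfolding G_def by auto
      have ne: "K1 \<noteq> {}" "K2 \<noteq> {}" using K KA unfolding \<A>_def by auto
      have "\<exists>z. z \<in> K1 \<and> z \<in> K2" using Kch[OF K(1) K(3)] ne by blast
      then obtain z where z: "z \<in> adm M (FF K1)" "z \<in> adm M (FF K2)" using FF K by auto
      have "dist x z \<le> r" "dist y z \<le> s" using z K unfolding adm_def by auto
      then show "dist x y \<le> r + s" using dist_triangle2[of x y z] by linarith
    qed
    moreover have "T ` adm M G \<subseteq> adm M G"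
      using IK TM KA unfolding \<A>_def by blast
    ultimately have IA: "adm M G \<in> \<A>" using GM unfolding \<A>_def by blast
    show ?thesis
    proof (intro bexI[of _ "- adm M G"])
      show "- adm M G \<in> uminus ` \<A>" using IA by auto
      show "\<forall>X\<in>C. X \<subseteq> - adm M G"
      proof
        fix X assume "X \<in> C"
        then have "- X \<in> \<K>" unfolding \<K>_def by auto
        then have "adm M G \<subseteq> - X" using IK by auto
        then show "X \<subseteq> - adm M G" by auto
      qed
    qed
  qed
  then obtain K' where K': "K' \<in> uminus`\<A>" "\<And>X. X\<in>uminus`\<A> \<Longrightarrow> K' \<subseteq> X \<Longrightarrow> X = K'"
    using subset_Zorn[of "uminus`\<A>"] by meson
  define K where "K = - K'"
  have KA: "K \<in> \<A>" using K'(1) unfolding K_def by auto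
  have Kmin: "X = K" if "X \<in> \<A>" "X \<subseteq> K" for X
  proof -
    have "- X = K'" using K'(2)[of "- X"] that unfolding K_def by auto
    then show ?thesis unfolding K_def by auto
  qed
  obtain F where F: "F \<subseteq> M\<times>UNIV" "K = adm M F" and Kne: "K \<noteq> {}" and TK: "T ` K \<subseteq> K"
    using KA unfolding \<A>_def by auto
  have KM: "K \<subseteq> M" using F unfolding adm_def by auto
  have bK: "bounded K" using bounded_subset[OF bM KM] .
  define FC where "FC = {(x,r). x \<in> M \<and> T ` K \<subseteq> cball x r}"
  have FCM: "FC \<subseteq> M \<times> UNIV" unfolding FC_def by auto
  have CK: "adm M FC \<subseteq> K"
  proof
    fix z assume z: "z \<in> adm M FC"
    have "(x,r) \<in> FC" if "(x,r) \<in> F" for x r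
    proof -
      have "K \<subseteq> cball x r" using that F unfolding adm_def by (auto simp: mem_cball)
      then show ?thesis using that F TK unfolding FC_def by auto
    qed
    then have FFC: "\<And>p. p \<in> F \<Longrightarrow> p \<in> FC" by auto
    have "z \<in> M" "\<forall>p\<in>FC. dist (fst p) z \<le> snd p" using z unfolding adm_def by auto
    then have "z \<in> M" "\<forall>p\<in>F. dist (fst p) z \<le> snd p" using FFC by auto
    then have "z \<in> adm M F" unfolding adm_def by auto
    then show "z \<in> K" using F by simp
  qed
  have TKC: "T ` K \<subseteq> adm M FC" using TK KM unfolding adm_def FC_def by (auto simp: mem_cball)
  have "adm M FC \<in> \<A>" unfolding \<A>_def using TKC CK Kne FCM by blast
  then have CeqK: "adm M FC = K" using Kmin CK by blast
  define \<delta> where "\<delta> = diameter K"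
  have d0: "0 \<le> \<delta>" unfolding \<delta>_def using diameter_ge_0[OF bK] .
  have dK: "\<And>x y. x \<in> K \<Longrightarrow> y \<in> K \<Longrightarrow> dist x y \<le> \<delta>"
    unfolding \<delta>_def using diameter_bounded_bound[OF bK] by blast
  define Fc where "Fc = F \<union> (K \<times> {\<delta>/2})"
  have FcM: "Fc \<subseteq> M \<times> UNIV" using F KM unfolding Fc_def by auto
  have Kc_sub: "adm M Fc \<subseteq> K" using F unfolding adm_def Fc_def by auto
  have Kc_ne: "adm M Fc \<noteq> {}"
  proof (rule hyperconvexD[OF hM FcM])
    fix x r y s assume xr: "(x,r) \<in> Fc" and ys: "(y,s) \<in> Fc"
    obtain w where w: "w \<in> K" using Kne by auto
    have rad: "\<And>u t v. (u,t) \<in> F \<Longrightarrow> v \<in> K \<Longrightarrow> dist u v \<le> t"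
      using F unfolding adm_def by auto
    show "dist x y \<le> r + s"
    proof (cases "(x,r) \<in> F")
      case True
      note xF = True
      show ?thesis
      proof (cases "(y,s) \<in> F")
        case True
        have "dist x w \<le> r" "dist y w \<le> s" using rad xF True w by auto
        then show ?thesis using dist_triangle2[of x y w] by linarith
      next
        case False
        then have "y \<in> K" "s = \<delta>/2" using ys unfolding Fc_def by auto
        then show ?thesis using rad[OF xF] d0 by fastforce
      qed
    next
      case False
      then have xK: "x \<in> K" "r = \<delta>/2" using xr unfolding Fc_def by auto
      show ?thesis
      proof (cases "(y,s) \<in> F")
        case True
        then show ?thesis using rad[OF True xK(1)] d0 xK by (simp add: dist_commute)
      next
        case False
        then have "y \<in> K" "s = \<delta>/2" using ys unfolding Fc_def by auto
        then show ?thesis using dK[OF xK(1)] xK by fastforce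
      qed
    qed
  qed
  have Kc_inv: "T ` adm M Fc \<subseteq> adm M Fc"
  proof
    fix u assume "u \<in> T ` adm M Fc"
    then obtain x where x: "x \<in> adm M Fc" "u = T x" by auto
    have xK: "x \<in> K" using x Kc_sub by auto
    have xc: "\<And>y. y \<in> K \<Longrightarrow> dist y x \<le> \<delta>/2"
    proof -
      fix y assume "y \<in> K"
      then have "(y, \<delta>/2) \<in> Fc" unfolding Fc_def by auto
      then show "dist y x \<le> \<delta>/2" using adm_memD[OF x(1)] by blast
    qed
    have "dist (T x) (T y) \<le> \<delta>/2" if yK: "y \<in> K" for y
    proof -
      have oK: "orbit T y \<subseteq> K"
      proof
        fix v assume "v \<in> orbit T y"
        then obtain n where "v = (T ^^ n) y" unfolding orbit_def by auto
        moreover have "(T ^^ n) y \<in> K" by (induction n) (use yK TK in auto)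
        ultimately show "v \<in> K" by simp
      qed
      have "rad x (orbit T y) \<le> \<delta>/2" unfolding rad_def orbit_def
        apply (rule cSUP_least)
        using oK xc unfolding orbit_def by (auto simp: dist_commute)
      then show ?thesis using orb[of x y] xK yK KM by fastforce
    qed
    then have "T ` K \<subseteq> cball (T x) (\<delta>/2)" by (auto simp: mem_cball)
    moreover have TxK: "T x \<in> K" using TK xK by auto
    ultimately have "(T x, \<delta>/2) \<in> FC" using KM unfolding FC_def by auto
    then have "\<forall>y\<in>K. dist (T x) y \<le> \<delta>/2" using CeqK unfolding adm_def by auto
    then have "T x \<in> adm M Fc" using TxK F KM unfolding adm_def Fc_def by (auto simp: dist_commute)
    then show "u \<in> adm M Fc" using x by simp
  qed
  have "adm M Fc \<in> \<A>" unfolding \<A>_def using Kc_ne Kc_inv FcM by blast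
  then have KcK: "adm M Fc = K" using Kmin Kc_sub by blast
  have half: "dist x y \<le> \<delta>/2" if xy: "x \<in> K" "y \<in> K" for x y
  proof -
    have "(x, \<delta>/2) \<in> Fc" using xy unfolding Fc_def by auto
    moreover have "y \<in> adm M Fc" using KcK xy by simp
    ultimately show ?thesis using adm_memD by blast
  qed
  have S: "(SUP (x,y)\<in>K\<times>K. dist x y) \<le> \<delta>/2"
  proof (rule cSUP_least)
    show "K \<times> K \<noteq> {}" using Kne by blast
    fix p assume p: "p \<in> K \<times> K"
    obtain a b where ab: "p = (a,b)" "a \<in> K" "b \<in> K" using p by blast
    have "dist a b \<le> \<delta>/2" using half[OF ab(2,3)] .
    then show "(case p of (x, y) \<Rightarrow> dist x y) \<le> \<delta>/2" unfolding ab(1) by simp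
  qed
  have "diameter K = (SUP (x,y)\<in>K\<times>K. dist x y)" using Kne unfolding diameter_def by (rule if_not_P)
  then have "\<delta> \<le> \<delta>/2" using S unfolding \<delta>_def by linarith
  then have "\<delta> = 0" using d0 by linarith
  obtain x where xK: "x \<in> K" using Kne by auto
  have TxK: "T x \<in> K" using TK xK by blast
  have "dist x (T x) \<le> 0" using dK[OF xK TxK] \<open>\<delta> = 0\<close> by simp
  then have "T x = x" by simp
  moreover have "x \<in> M" using xK KM by blast
  ultimately show ?thesis by blast
qed

theorem corollary2p2:
  fixes M :: "'a::metric_space set" and T :: "'a \<Rightarrow> 'a"
  assumes "bounded M"
    and "hyperconvex M"
    and "T ` M \<subseteq> M"
    and "orbitally_wrt_nonexpansive M T"
  shows "{x \<in> M. T x = x} \<noteq> {} \<and> hyperconvex {x \<in> M. T x = x}"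
proof -
  have orb: "\<And>x y. x \<in> M \<Longrightarrow> y \<in> M \<Longrightarrow> dist (T x) (T y) \<le> rad x (orbit T y)"
    using assms(4) unfolding orbitally_wrt_nonexpansive_def by blast
  have P1: "{x \<in> M. T x = x} \<noteq> {}"
    using fixed_point_exists[OF assms(1-3) orb] by auto
  have P2: "hyperconvex {x \<in> M. T x = x}"
    unfolding hyperconvex_def
  proof (intro allI impI)
    fix F assume FF: "F \<subseteq> {x \<in> M. T x = x} \<times> (UNIV :: real set)"
      and pw: "\<forall>(x, r)\<in>F. \<forall>(y, s)\<in>F. dist x y \<le> r + s"
    define D where "D = adm M F"
    have FM: "F \<subseteq> M \<times> UNIV" using FF by auto
    have DM: "D \<subseteq> M" unfolding D_def adm_def by auto
    have hD: "hyperconvex D"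
      unfolding hyperconvex_def
    proof (intro allI impI)
      fix G assume GD: "G \<subseteq> D \<times> (UNIV :: real set)"
        and pwG: "\<forall>(x, r)\<in>G. \<forall>(y, s)\<in>G. dist x y \<le> r + s"
      have "adm M (F \<union> G) \<noteq> {}"
      proof (rule hyperconvexD[OF assms(2)])
        show "F \<union> G \<subseteq> M \<times> UNIV" using FM GD DM by auto
        fix x r y s assume xr: "(x,r) \<in> F \<union> G" and ys: "(y,s) \<in> F \<union> G"
        have Gs: "\<And>u t. (u,t) \<in> G \<Longrightarrow> 0 \<le> t" using pwG by fastforce
        have FG: "\<And>u t v w. (u,t) \<in> F \<Longrightarrow> (v,w) \<in> G \<Longrightarrow> dist u v \<le> t"
          using GD unfolding D_def adm_def by fastforce
        show "dist x y \<le> r + s"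
        proof -
          consider "(x,r) \<in> F" "(y,s) \<in> F" | "(x,r) \<in> F" "(y,s) \<in> G"
            | "(x,r) \<in> G" "(y,s) \<in> F" | "(x,r) \<in> G" "(y,s) \<in> G"
            using xr ys by blast
          then show ?thesis
          proof cases
            case 1 then show ?thesis using pw by fastforce
          next
            case 2 then show ?thesis using FG[of x r y s] Gs[of y s] by linarith
          next
            case 3 then show ?thesis using FG[of y s x r] Gs[of x r]
              by (simp add: dist_commute)
          next
            case 4 then show ?thesis using pwG by fastforce
          qed
        qed
      qed
      then obtain z where z: "z \<in> adm M (F \<union> G)" by auto
      then have "z \<in> D" unfolding D_def adm_def by auto
      moreover have "\<forall>(x, r)\<in>G. dist x z \<le> r" using z unfolding adm_def by auto
      ultimately show "\<exists>z\<in>D. \<forall>(x, r)\<in>G. dist x z \<le> r" by blast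
    qed
    have TD: "T ` D \<subseteq> D"
    proof
      fix u assume "u \<in> T ` D"
      then obtain z where z: "z \<in> D" "u = T z" by auto
      have "dist x (T z) \<le> r" if xr: "(x,r) \<in> F" for x r
      proof -
        have x: "x \<in> M" "T x = x" using xr FF by auto
        have o: "orbit T x = {x}" unfolding orbit_def
        proof -
          have "(T ^^ n) x = x" for n by (induction n) (use x in auto)
          then show "range (\<lambda>n. (T ^^ n) x) = {x}" by auto
        qed
        have zM: "z \<in> M" using z(1) DM by auto
        have "dist (T z) (T x) \<le> rad z (orbit T x)" using orb[OF zM x(1)] .
        also have "\<dots> = dist z x" unfolding o rad_def by simp
        finally show ?thesis using x xr z(1) unfolding D_def adm_def
          by (auto simp: dist_commute)
      qed
      then show "u \<in> D" using z DM assms(3) unfolding D_def adm_def by auto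
    qed
    obtain z where z: "z \<in> D" "T z = z"
      using fixed_point_exists[OF bounded_subset[OF assms(1) DM] hD TD] orb DM by blast
    then show "\<exists>z\<in>{x \<in> M. T x = x}. \<forall>(x, r)\<in>F. dist x z \<le> r"
      unfolding D_def adm_def by auto
  qed
  show ?thesis using P1 P2 by blast
qed


end
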